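(* Under Assumptions A2 and A3, for every $\gamma\in(0,q-2)$, with $\xi_t=[y_t^\top,u_t^\top]^\top$, $$\frac1T\sum_{t=0}^{T-1}\|\xi_t\|^{2+\gamma}=O(1)\quad\text{almost surely as }T\to\infty.$$ Consequently, if in addition A1 and A4 hold and $\hat\theta_t$, $\phi_t=\nabla_\theta^\top h(\hat\theta_t,y_t,u_t)$ are generated by Algorithm 1, then $r_T=\sum_{i=0}^T\|\phi_i\|^2=O(T)$ almost surely.
   Context: Let $\{\mathcal F_t\}_{t\ge0}$ be a nondecreasing sequence of $\sigma$-algebras. Consider the discrete-time stochastic system, for all $t\ge0$, $$x_{t+1}=h(\theta^*,x_t,u_t)+w_{t+1},\qquad y_{t+1}=x_{t+1},$$ with $y_0=x_0$, where $\theta^*\in\mathbb R^p$ is unknown, $x_t,y_t,w_t\in\mathbb R^n$, $u_t\in\mathbb R^m$, and $h:\mathbb R^p\times\mathbb R^n\times\mathbb R^m\to\mathbb R^n$ is differentiable in $\theta$ with Jacobian $\nabla_\theta h(\theta,x,u)\in\mathbb R^{n\times p}$. Inputs are $u_t=\pi(x_t)+\epsilon_t$, where $\pi:\mathbb R^n\to\mathbb R^m$ is a fixed (unknown) policy and $\epsilon_t$ an exploration signal; $x_t,y_t,u_t$ (hence $\nabla_\theta h(\theta^*,x_t,u_t)$) are $\mathcal F_t$-measurable. Loss: $\mathcal L(\theta,y,u)=\|h(\theta^*,y,u)-h(\theta,y,u)\|^2$. The system is called $\rho$-stable if there exist $\rho\in(0,1)$ and a norm $\|\cdot\|_1$ on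 $\mathbb R^n$ with $\|h(\theta^*,x_t,u_t)\|_1\le\rho\|x_t\|_1$ for all $t\ge0$. Assumptions. (A1) There is a known $D>0$ with $\|\theta^*\|\le D$. (A2) $\{w_{t+1},\mathcal F_{t+1}\}$ is a martingale difference sequence ($w_{t+1}$ is $\mathcal F_{t+1}$-measurable, $\mathbb E[w_{t+1}\mid\mathcal F_t]=0$) and for some $q>2$, $\sup_{t\ge0}\mathbb E[\|w_{t+1}\|^q\mid\mathcal F_t]<\infty$ a.s. (A3) $\pi$ is Lipschitz: $\|\pi(x)-\pi(y)\|\le L\|x-y\|$; $\|\epsilon_t\|\le\bar\epsilon$ for all $t$; and the closed-loop system is $\rho$-stable. (A4) There is a function $r\mapsto\alpha(r)>0$ and a constant $\beta\ge1$ such that for every $r>0$, all $t\ge0$, and all $\theta$ with $\|\theta-\theta^*\|\le r$, $\|y_t\|\le r$, $\|u_t\|\le r$: $$\langle\theta-\theta^*,\nabla_\theta\mathcal L(\theta,y_t,u_t)\rangle\ge\alpha(r)\,\|\nabla_\theta h(\theta,y_t,u_t)(\theta-\theta^* )\|^2,\qquad \mathcal L(\theta,y_t,u_t)\le\beta\langle\theta-\theta^*,\nabla_\theta\mathcal L(\theta,y_t,u_t)\rangle;$$ $\nabla_\theta h(\theta,y_t,u_t)$ is continuous in $\theta$; and for every $r>0$ there is $M(r)>0$ with $\|\nabla_\theta h(\theta,a_1,b_1)-\nabla_\theta h(\theta,a_2,b_2)\|\le M(r)\|\xi_1-\xi_2\|$ for all $a_i\in\mathbb R^n$, $b_i\in\mathbb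 R^m$, $\|\theta-\theta^*\|\le r$, where $\xi_i=[a_i^\top,b_i^\top]^\top$. Algorithm 1. Take arbitrary $\hat\theta_0\in\mathbb R^p$ and $P_0=I_p$. For $t\ge0$, with $\phi_t=\nabla_\theta^\top h(\hat\theta_t,y_t,u_t)\in\mathbb R^{p\times n}$ and $\alpha_t=\alpha(\|y_t\|+\|u_t\|+D)$, the quantities $\eta_t>0$, $\Gamma_t$, $P_{t+1}$, $\hat\theta_{t+1}$ satisfy $$\Gamma_t=(I+\eta_t^2\phi_t^\top P_t\phi_t)^{-1},\quad P_{t+1}=P_t-\eta_t^2P_t\phi_t\Gamma_t\phi_t^\top P_t,\quad \eta_t=\frac{1}{\alpha_t^{-1}+2\beta\|\phi_t^\top P_{t+1}\phi_t\|},$$ $$\hat\theta_{t+1}=\Pi_{P_{t+1}^{-1}}\big\{\hat\theta_t+\eta_tP_{t+1}\phi_t\,[y_{t+1}-h(\hat\theta_t,y_t,u_t)]\big\},$$ where $\Pi_{P^{-1}}\{x\}=\arg\min_{\|\omega\|\le D}(x-\omega)^\top P^{-1}(x-\omega)$ (so $\eta_t$ and $P_{t+1}$ are determined jointly by these relations). *)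

theory Defs
  imports "HOL-Probability.Probability" "HOL-Library.Landau_Symbols"
begin

definition is_norm :: "('a::real_vector \<Rightarrow> real) \<Rightarrow> bool" where
  "is_norm N \<longleftrightarrow> (\<forall>x. 0 \<le> N x) \<and> (\<forall>x. N x = 0 \<longleftrightarrow> x = 0)
     \<and> (\<forall>c x. N (c *\<^sub>R x) = \<bar>c\<bar> * N x) \<and> (\<forall>x y. N (x + y) \<le> N x + N y)"

definition loss ::
  "('p \<Rightarrow> 'x \<Rightarrow> 'u \<Rightarrow> 'y::real_normed_vector) \<Rightarrow> 'p \<Rightarrow> 'p \<Rightarrow> 'x \<Rightarrow> 'u \<Rightarrow> real" where
  "loss h ths th y u = (norm (h ths y u - h th y u))\<^sup>2"

text \<open>Gradient in theta of the loss, computed by the chain rule from the Jacobian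
  J(theta,y,u) of h in theta:  grad L = 2 J^T (h(theta,y,u) - h(theta*,y,u)).\<close>
definition loss_grad ::
  "(real^'p \<Rightarrow> 'x \<Rightarrow> 'u \<Rightarrow> real^'n) \<Rightarrow> (real^'p \<Rightarrow> 'x \<Rightarrow> 'u \<Rightarrow> real^'p^'n)
    \<Rightarrow> real^'p \<Rightarrow> real^'p \<Rightarrow> 'x \<Rightarrow> 'u \<Rightarrow> real^'p" where
  "loss_grad h J ths th y u = 2 *\<^sub>R (transpose (J th y u) *v (h th y u - h ths y u))"

definition is_proj :: "real^'p^'p \<Rightarrow> real \<Rightarrow> real^'p \<Rightarrow> real^'p \<Rightarrow> bool" where
  "is_proj Q D x z \<longleftrightarrow> norm z \<le> D \<and>
     (\<forall>v. norm v \<le> D \<longrightarrow> (x - z) \<bullet> (Q *v (x - z)) \<le> (x - v) \<bullet> (Q *v (x - v)))"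

end

theory Submission
  imports Defs
begin

lemma filt_le:
  assumes "\<And>t. sets (G t) \<subseteq> sets (G (Suc t))" "s \<le> t"
  shows "sets (G s) \<subseteq> sets (G t)"
  using assms(2)
proof (induction t)
  case 0 then show ?case by simp
next
  case (Suc t) then show ?case using assms(1)[of t] by (cases "s = Suc t") auto
qed

lemma meas_filt_le:
  assumes "\<And>t. sets (G t) \<subseteq> sets (G (Suc t))" "s \<le> t" "\<And>t. space (G t) = X"
    and "f \<in> borel_measurable (G s)"
  shows "f \<in> borel_measurable (G t)"
proof -
  have "sets (G s) \<subseteq> sets (G t)" by (rule filt_le[of G, OF assms(1,2)])
  then show ?thesis using assms(3,4) by (metis measurable_from_subalg subalgebra_def)
qed

lemma core_step12:
  fixes M :: "'w measure" and G :: "nat \<Rightarrow> 'w measure" and Y :: "nat \<Rightarrow> 'w \<Rightarrow> real"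
  assumes prob: "prob_space M"
  and subalg: "\<And>t. subalgebra M (G t)"
  and Ymeas: "\<And>t. Y t \<in> borel_measurable (G (Suc t))"
  and Ynn: "\<And>t \<omega>. 0 \<le> Y t \<omega>"
  and r: "1 < r"
  and K: "0 \<le> K"
  and cond: "\<And>t. AE \<omega> in M. nn_cond_exp M (G t) (\<lambda>\<omega>. ennreal (Y t \<omega> powr r)) \<omega> \<le> ennreal K"
  and YM: "\<And>t. Y t \<in> borel_measurable M"
  shows "(\<integral>\<^sup>+\<omega>. ennreal (Y t \<omega> powr r) \<partial>M) \<le> ennreal K"
proof -
  interpret prob_space M by (rule prob)
  have sf: "sigma_finite_subalgebra M (G t)"
    by (rule finite_measure_subalgebra_is_sigma_finite) (simp add: finite_measure_subalgebra_def finite_measure_subalgebra_axioms_def subalg finite_measure_axioms)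
  have [measurable]: "Y t \<in> borel_measurable M" by (rule YM)
  have "(\<integral>\<^sup>+\<omega>. ennreal (Y t \<omega> powr r) \<partial>M) = (\<integral>\<^sup>+\<omega>. 1 * ennreal (Y t \<omega> powr r) \<partial>M)" by simp
  also have "\<dots> = (\<integral>\<^sup>+\<omega>. 1 * nn_cond_exp M (G t) (\<lambda>\<omega>. ennreal (Y t \<omega> powr r)) \<omega> \<partial>M)"
    by (rule sigma_finite_subalgebra.nn_cond_exp_intg[OF sf, symmetric]) auto
  also have "\<dots> \<le> (\<integral>\<^sup>+\<omega>. ennreal K \<partial>M)"
    by (rule nn_integral_mono_AE) (use cond[of t] in auto)
  also have "\<dots> = ennreal K" by (simp add: emeasure_space_1)
  finally show ?thesis .
qed

lemma core_bc1:
  fixes M :: "'w measure" and Y :: "nat \<Rightarrow> 'w \<Rightarrow> real"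
  assumes prob: "prob_space M"
  and YM: "\<And>t. Y t \<in> borel_measurable M"
  and Ynn: "\<And>t \<omega>. 0 \<le> Y t \<omega>"
  and r: "1 < r"
  and K: "0 \<le> K"
  and mom: "\<And>t. (\<integral>\<^sup>+\<omega>. ennreal (Y t \<omega> powr r) \<partial>M) \<le> ennreal K"
  shows "AE \<omega> in M. eventually (\<lambda>t. Y t \<omega> \<le> real t + 1) sequentially"
proof -
  interpret prob_space M by (rule prob)
  define A where "A t = {\<omega>\<in>space M. real t + 1 < Y t \<omega>}" for t
  have [measurable]: "Y t \<in> borel_measurable M" for t by (rule YM)
  have Am[measurable]: "A t \<in> sets M" for t unfolding A_def by measurable
  have Ab: "measure M (A t) \<le> K * (real t + 1) powr (-r)" for t
  proof -
    define c where "c = (real t + 1) powr (-r)"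
    have c0: "0 < c" unfolding c_def by simp
    have sub: "A t \<subseteq> {x\<in>space M. 1 \<le> ennreal c * ennreal (Y t x powr r)}"
    proof
      fix x assume "x \<in> A t"
      then have x: "x \<in> space M" "real t + 1 < Y t x" unfolding A_def by auto
      have "(real t + 1) powr r \<le> Y t x powr r"
        by (rule powr_mono2) (use x r in auto)
      then have "c * (real t + 1) powr r \<le> c * Y t x powr r"
        using c0 by (simp add: mult_left_mono)
      moreover have "c * (real t + 1) powr r = 1"
        unfolding c_def by (simp add: powr_add[symmetric])
      ultimately have "1 \<le> c * Y t x powr r" by simp
      then have "ennreal 1 \<le> ennreal (c * Y t x powr r)" by (rule ennreal_leI)
      then show "x \<in> {x\<in>space M. 1 \<le> ennreal c * ennreal (Y t x powr r)}"
        using x c0 by (simp add: ennreal_mult)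
    qed
    have "emeasure M (A t) \<le> emeasure M {x\<in>space M. 1 \<le> ennreal c * ennreal (Y t x powr r)}"
      by (rule emeasure_mono[OF sub]) measurable
    also have "\<dots> \<le> ennreal c * (\<integral>\<^sup>+ x. ennreal (Y t x powr r) * indicator (space M) x \<partial>M)"
      by (rule nn_integral_Markov_inequality) auto
    also have "(\<integral>\<^sup>+ x. ennreal (Y t x powr r) * indicator (space M) x \<partial>M) = (\<integral>\<^sup>+ x. ennreal (Y t x powr r) \<partial>M)"
      by (rule nn_integral_cong) auto
    also have "ennreal c * (\<integral>\<^sup>+ x. ennreal (Y t x powr r) \<partial>M) \<le> ennreal c * ennreal K"
      by (rule mult_left_mono[OF mom]) auto
    also have "\<dots> = ennreal (K * c)" using c0 K by (simp add: ennreal_mult mult.commute)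
    finally have "emeasure M (A t) \<le> ennreal (K * c)" .
    then show ?thesis unfolding c_def using K c0
      by (simp add: emeasure_eq_measure c_def)
  qed
  have s1: "summable (\<lambda>n. real n powr (-r))" using r by (simp add: summable_real_powr_iff)
  then have s2: "summable (\<lambda>n. real (Suc n) powr (-r))" by (subst summable_Suc_iff)
  then have s3: "summable (\<lambda>n. K * (real n + 1) powr (-r))" by (simp add: summable_mult add.commute)
  have "summable (\<lambda>n. measure M (A n))"
    by (rule summable_comparison_test[OF _ s3]) (use Ab in auto)
  then have "AE x in M. eventually (\<lambda>n. x \<in> space M - A n) sequentially"
    by (intro borel_cantelli_AE1) (auto simp: emeasure_eq_measure)
  then show ?thesis
    by eventually_elim (auto simp: A_def elim!: eventually_mono)
qed

lemma sf_of:
  assumes "prob_space M" "subalgebra M F"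
  shows "sigma_finite_subalgebra M F"
proof -
  interpret prob_space M by (rule assms)
  show ?thesis
    by (rule finite_measure_subalgebra_is_sigma_finite) (simp add: finite_measure_subalgebra_def finite_measure_subalgebra_axioms_def assms finite_measure_axioms)
qed

lemma core_condbound:
  fixes M :: "'w measure" and F :: "'w measure" and Y Z :: "'w \<Rightarrow> real"
  assumes prob: "prob_space M"
  and subalg: "subalgebra M F"
  and [measurable]: "Y \<in> borel_measurable M" "Z \<in> borel_measurable M"
  and Znn: "\<And>\<omega>. 0 \<le> Z \<omega>"
  and ZY: "\<And>\<omega>. Z \<omega> \<le> 1 + Y \<omega> powr r"
  and cond: "AE \<omega> in M. nn_cond_exp M F (\<lambda>\<omega>. ennreal (Y \<omega> powr r)) \<omega> \<le> ennreal K"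
  and K: "0 \<le> K"
  shows "AE \<omega> in M. real_cond_exp M F Z \<omega> \<le> 1 + K"
proof -
  interpret sigma_finite_subalgebra M F by (rule sf_of[OF prob subalg])
  have a1: "AE \<omega> in M. nn_cond_exp M F (\<lambda>\<omega>. ennreal (Z \<omega>)) \<omega> \<le> nn_cond_exp M F (\<lambda>\<omega>. 1 + ennreal (Y \<omega> powr r)) \<omega>"
  proof (rule nn_cond_exp_mono)
    show "AE x in M. ennreal (Z x) \<le> 1 + ennreal (Y x powr r)"
    proof (intro AE_I2)
      fix x
      have "ennreal (Z x) \<le> ennreal (1 + Y x powr r)" using ZY[of x] by (rule ennreal_leI)
      also have "\<dots> = 1 + ennreal (Y x powr r)" by (simp add: ennreal_plus)
      finally show "ennreal (Z x) \<le> 1 + ennreal (Y x powr r)" .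
    qed
  qed auto
  have a2: "AE \<omega> in M. nn_cond_exp M F (\<lambda>\<omega>. 1) \<omega> + nn_cond_exp M F (\<lambda>\<omega>. ennreal (Y \<omega> powr r)) \<omega> = nn_cond_exp M F (\<lambda>\<omega>. 1 + ennreal (Y \<omega> powr r)) \<omega>"
    by (rule nn_cond_exp_sum) auto
  have a3: "AE \<omega> in M. (\<lambda>\<omega>. 1::ennreal) \<omega> = nn_cond_exp M F (\<lambda>\<omega>. 1) \<omega>"
    by (rule nn_cond_exp_F_meas) auto
  have e0: "(\<lambda>\<omega>. ennreal (- Z \<omega>)) = (\<lambda>\<omega>. 0)" using Znn by (auto simp: ennreal_neg)
  have a4: "AE \<omega> in M. (\<lambda>\<omega>. 0::ennreal) \<omega> = nn_cond_exp M F (\<lambda>\<omega>. 0) \<omega>"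
    by (rule nn_cond_exp_F_meas) auto
  show ?thesis
    using a1 a2 a3 a4 cond
  proof eventually_elim
    case (elim \<omega>)
    have "nn_cond_exp M F (\<lambda>\<omega>. ennreal (Z \<omega>)) \<omega> \<le> 1 + ennreal K"
      using elim by (metis add_left_mono order_trans)
    also have "\<dots> = ennreal (1 + K)" using K by (simp add: ennreal_plus)
    finally have "enn2real (nn_cond_exp M F (\<lambda>\<omega>. ennreal (Z \<omega>)) \<omega>) \<le> 1 + K"
      by (rule enn2real_leI[rotated]) (use K in simp)
    then show ?case unfolding real_cond_exp_def e0 using elim(4)[symmetric] by simp
  qed
qed

lemma sq_le_of_abs: "\<bar>a::real\<bar> \<le> b \<Longrightarrow> a\<^sup>2 \<le> b\<^sup>2"
  by (metis abs_ge_zero power2_abs power_mono)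

lemma orth:
  fixes M F :: "'w measure"
  assumes prob: "prob_space M" and subalg: "subalgebra M F"
  and fm[measurable]: "f \<in> borel_measurable F" and fb: "\<And>\<omega>. \<bar>f \<omega>\<bar> \<le> bf"
  and ym[measurable]: "y \<in> borel_measurable M" and yb: "\<And>\<omega>. \<bar>y \<omega>\<bar> \<le> by"
  and mm[measurable]: "m \<in> borel_measurable M" and mb: "\<And>\<omega>. \<bar>m \<omega>\<bar> \<le> bm"
  and ae: "AE \<omega> in M. m \<omega> = real_cond_exp M F y \<omega>"
  shows "(\<integral>\<omega>. f \<omega> * (y \<omega> - m \<omega>) \<partial>M) = 0"
proof -
  interpret sigma_finite_subalgebra M F by (rule sf_of[OF prob subalg])
  interpret prob_space M by (rule prob)
  have fM[measurable]: "f \<in> borel_measurable M" by (rule measurable_from_subalg[OF subalg fm])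
  have i1: "integrable M (\<lambda>\<omega>. f \<omega> * y \<omega>)"
    by (rule integrable_const_bound[where B="bf*by"]) (auto simp: abs_mult intro!: mult_mono fb yb order_trans[OF abs_ge_zero fb])
  have i2: "integrable M (\<lambda>\<omega>. f \<omega> * m \<omega>)"
    by (rule integrable_const_bound[where B="bf*bm"]) (auto simp: abs_mult intro!: mult_mono fb mb order_trans[OF abs_ge_zero fb])
  have "(\<integral>\<omega>. f \<omega> * (y \<omega> - m \<omega>) \<partial>M) = (\<integral>\<omega>. f \<omega> * y \<omega> \<partial>M) - (\<integral>\<omega>. f \<omega> * m \<omega> \<partial>M)"
    using i1 i2 by (simp add: right_diff_distrib)
  also have "(\<integral>\<omega>. f \<omega> * m \<omega> \<partial>M) = (\<integral>\<omega>. f \<omega> * real_cond_exp M F y \<omega> \<partial>M)"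
    by (rule integral_cong_AE) (use ae in auto)
  also have "\<dots> = (\<integral>\<omega>. f \<omega> * y \<omega> \<partial>M)"
    by (rule real_cond_exp_intg(2)[OF i1]) auto
  finally show ?thesis by simp
qed

lemma sq_sum_bound:
  fixes M :: "'w measure" and G :: "nat \<Rightarrow> 'w measure"
  assumes prob: "prob_space M"
  and subalg: "\<And>t. subalgebra M (G t)"
  and mono: "\<And>t. sets (G t) \<subseteq> sets (G (Suc t))"
  and ym: "\<And>t. y t \<in> borel_measurable (G (Suc t))" and yb: "\<And>t \<omega>. \<bar>y t \<omega>\<bar> \<le> b t"
  and mm: "\<And>t. m t \<in> borel_measurable (G t)" and mb: "\<And>t \<omega>. \<bar>m t \<omega>\<bar> \<le> b t"
  and ae: "\<And>t. AE \<omega> in M. m t \<omega> = real_cond_exp M (G t) (y t) \<omega>"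
  shows "(\<integral>\<omega>. (\<Sum>t<n. y t \<omega> - m t \<omega>)\<^sup>2 \<partial>M) \<le> (\<Sum>t<n. \<integral>\<omega>. (y t \<omega> - m t \<omega>)\<^sup>2 \<partial>M)"
proof (induction n)
  case 0 then show ?case by simp
next
  case (Suc n)
  interpret prob_space M by (rule prob)
  have sp: "space (G t) = space M" for t using subalg[of t] by (simp add: subalgebra_def)
  have yM[measurable]: "y t \<in> borel_measurable M" for t using measurable_from_subalg[OF subalg ym] .
  have mM[measurable]: "m t \<in> borel_measurable M" for t using measurable_from_subalg[OF subalg mm] .
  have b0: "0 \<le> b t" for t using yb[of t] abs_ge_zero order_trans by blast
  define S where "S \<omega> = (\<Sum>t<n. y t \<omega> - m t \<omega>)" for \<omega>
  define d where "d \<omega> = y n \<omega> - m n \<omega>" for \<omega>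
  have SG: "S \<in> borel_measurable (G n)"
  proof -
    have "(\<lambda>\<omega>. y t \<omega> - m t \<omega>) \<in> borel_measurable (G n)" if "t < n" for t
    proof -
      have "y t \<in> borel_measurable (G n)"
        by (rule meas_filt_le[of G "Suc t" n, OF mono _ sp ym]) (use that in auto)
      moreover have "m t \<in> borel_measurable (G n)"
        by (rule meas_filt_le[of G t n, OF mono _ sp mm]) (use that in auto)
      ultimately show ?thesis by measurable
    qed
    then show ?thesis unfolding S_def by (intro borel_measurable_sum) auto
  qed
  have SM[measurable]: "S \<in> borel_measurable M" using measurable_from_subalg[OF subalg SG] .
  have dM[measurable]: "d \<in> borel_measurable M" unfolding d_def by measurable
  define bS where "bS = (\<Sum>t<n. 2 * b t)"
  have Sb: "\<bar>S \<omega>\<bar> \<le> bS" for \<omega>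
    unfolding S_def bS_def
    by (rule order_trans[OF sum_abs]) (intro sum_mono, metis yb mb abs_triangle_ineq4 add_mono mult_2 order_trans)
  have db: "\<bar>d \<omega>\<bar> \<le> 2 * b n" for \<omega>
    unfolding d_def using yb[of n \<omega>] mb[of n \<omega>] by linarith
  have bS0: "0 \<le> bS" using Sb abs_ge_zero order_trans by blast
  have o: "(\<integral>\<omega>. S \<omega> * (y n \<omega> - m n \<omega>) \<partial>M) = 0"
    by (rule orth[OF prob subalg SG Sb _ yb _ mb ae]) auto
  have iS2: "integrable M (\<lambda>\<omega>. (S \<omega>)\<^sup>2)"
    by (rule integrable_const_bound[where B="bS\<^sup>2"]) (auto intro!: sq_le_of_abs Sb)
  have id2: "integrable M (\<lambda>\<omega>. (d \<omega>)\<^sup>2)"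
    by (rule integrable_const_bound[where B="(2*b n)\<^sup>2"]) (use sq_le_of_abs[OF db] in auto)
  have iSd: "integrable M (\<lambda>\<omega>. 2 * (S \<omega> * d \<omega>))"
    by (rule integrable_const_bound[where B="2*(bS*(2*b n))"]) (use mult_mono[OF Sb db bS0 abs_ge_zero] in \<open>auto simp: abs_mult mult_ac intro!: AE_I2\<close>)
  have "(\<integral>\<omega>. (\<Sum>t<Suc n. y t \<omega> - m t \<omega>)\<^sup>2 \<partial>M) = (\<integral>\<omega>. (S \<omega>)\<^sup>2 + 2 * (S \<omega> * d \<omega>) + (d \<omega>)\<^sup>2 \<partial>M)"
    by (rule Bochner_Integration.integral_cong) (auto simp: S_def d_def power2_eq_square algebra_simps)
  also have "\<dots> = (\<integral>\<omega>. (S \<omega>)\<^sup>2 \<partial>M) + 2 * (\<integral>\<omega>. S \<omega> * d \<omega> \<partial>M) + (\<integral>\<omega>. (d \<omega>)\<^sup>2 \<partial>M)"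
    using iS2 id2 iSd by simp
  also have "(\<integral>\<omega>. S \<omega> * d \<omega> \<partial>M) = 0" using o by (simp add: d_def)
  also have "(\<integral>\<omega>. (S \<omega>)\<^sup>2 \<partial>M) \<le> (\<Sum>t<n. \<integral>\<omega>. (y t \<omega> - m t \<omega>)\<^sup>2 \<partial>M)"
    using Suc.IH by (simp add: S_def)
  finally show ?case by (simp add: d_def)
qed

lemma pow2_cover: "\<exists>j\<ge>j0. T \<le> (2::nat)^j \<and> 2^j \<le> 2^j0 + 2*T"
proof (induction T)
  case 0 then show ?case by auto
next
  case (Suc T)
  then obtain j where j: "j \<ge> j0" "T \<le> 2^j" "2^j \<le> (2::nat)^j0 + 2*T" by auto
  show ?case
  proof (cases "Suc T \<le> 2^j")
    case True then show ?thesis using j by (intro exI[of _ j]) auto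
  next
    case False
    then have "2^j = T" using j by auto
    then show ?thesis using j by (intro exI[of _ "Suc j"]) auto
  qed
qed

lemma final_det:
  fixes Y Yp m :: "nat \<Rightarrow> real"
  assumes t0: "\<And>t. t \<ge> t0 \<Longrightarrow> Y t \<le> real t + 1"
  and Ynn: "\<And>t. 0 \<le> Y t"
  and Yp: "\<And>t. Yp t = min (Y t) (real t + 1)"
  and mB: "\<And>t. m t \<le> B" and B: "0 \<le> B"
  and j0: "\<And>j. j \<ge> j0 \<Longrightarrow> \<bar>\<Sum>t<2^j. Yp t - m t\<bar> < 2^j"
  shows "\<exists>C. \<forall>T. (\<Sum>t<T. Y t) \<le> C * (real T + 1)"
proof -
  define A where "A = (\<Sum>t<t0. Y t)"
  have A0: "0 \<le> A" unfolding A_def by (intro sum_nonneg Ynn)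
  have Ypnn: "0 \<le> Yp t" for t using Yp[of t] Ynn[of t] by simp
  have main: "(\<Sum>t<T. Y t) \<le> A + (1+B) * (2^j0 + 2 * real T)" for T
  proof -
    obtain j where j: "j \<ge> j0" "T \<le> 2^j" "(2::nat)^j \<le> 2^j0 + 2*T" using pow2_cover by blast
    have jr: "(2::real)^j \<le> 2^j0 + 2 * real T"
      using j(3) by (metis (mono_tags, lifting) of_nat_add of_nat_le_iff of_nat_mult of_nat_numeral of_nat_power)
    have "(\<Sum>t<T. Y t) \<le> (\<Sum>t<T. Yp t + (if t < t0 then Y t else 0))"
      by (intro sum_mono) (use t0 Yp Ynn in \<open>auto simp: min_def\<close>)
    also have "\<dots> = (\<Sum>t<T. Yp t) + (\<Sum>t<T. (if t < t0 then Y t else 0))"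
      by (simp add: sum.distrib)
    also have "(\<Sum>t<T. (if t < t0 then Y t else 0)) \<le> (\<Sum>t<max T t0. (if t < t0 then Y t else 0))"
      by (rule sum_mono2) (auto simp: Ynn)
    also have "\<dots> = A"
    proof -
      have "(\<Sum>t<max T t0. (if t < t0 then Y t else 0)) = sum Y ({..<max T t0} \<inter> {..<t0})"
        by (subst sum.inter_restrict) auto
      also have "{..<max T t0} \<inter> {..<t0} = {..<t0}" by auto
      finally show ?thesis by (simp add: A_def)
    qed
    also have "(\<Sum>t<T. Yp t) \<le> (\<Sum>t<2^j. Yp t)"
      by (rule sum_mono2) (use j Ypnn in auto)
    also have "\<dots> = (\<Sum>t<2^j. Yp t - m t) + (\<Sum>t<(2::nat)^j. m t)"
      by (simp add: sum_subtractf)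
    also have "(\<Sum>t<2^j. Yp t - m t) \<le> 2^j" using j0[OF j(1)] by linarith
    also have "(\<Sum>t<(2::nat)^j. m t) \<le> (\<Sum>t<(2::nat)^j. B)" by (intro sum_mono mB)
    also have "\<dots> = B * 2^j" by simp
    finally have "(\<Sum>t<T. Y t) \<le> (1 + B) * 2^j + A" by (simp add: algebra_simps)
    also have "(1 + B) * 2^j \<le> (1+B) * (2^j0 + 2 * real T)"
      by (rule mult_left_mono[OF jr]) (use B in simp)
    finally show ?thesis by simp
  qed
  show ?thesis
  proof (intro exI allI)
    fix T
    have "(\<Sum>t<T. Y t) \<le> A + (1+B) * (2^j0 + 2 * real T)" by (rule main)
    also have "\<dots> \<le> (A + (1+B) * 2^j0 + 2 * (1+B)) * (real T + 1)"
      using A0 B by (simp add: algebra_simps mult_nonneg_nonneg)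
    finally show "(\<Sum>t<T. Y t) \<le> (A + (1+B) * 2^j0 + 2 * (1+B)) * (real T + 1)" .
  qed
qed

lemma pw1: assumes "0 \<le> (y::real)" "1 < r" shows "min y c \<le> 1 + y powr r"
proof (cases "y \<le> 1")
  case True then have "min y c \<le> 1" by simp
  moreover have "0 \<le> y powr r" by simp
  ultimately show ?thesis by linarith
next
  case False
  then have "y powr 1 \<le> y powr r" by (intro powr_mono) (use assms in auto)
  then show ?thesis using False by simp
qed

lemma pw2: assumes "0 \<le> (y::real)" "0 < c" "0 < r" "r \<le> 2"
  shows "(min y c)\<^sup>2 \<le> y powr r * c powr (2 - r)"
proof (cases "min y c = 0")
  case True then show ?thesis by simp
next
  case False
  then have z: "0 < min y c" using assms by simp
  have "(min y c)\<^sup>2 = min y c powr 2" using z by (simp add: powr_numeral)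
  also have "\<dots> = min y c powr r * min y c powr (2 - r)" using z by (simp add: powr_add[symmetric])
  also have "\<dots> \<le> y powr r * c powr (2 - r)"
    by (rule mult_mono; (rule powr_mono2)?) (use assms z in auto)
  finally show ?thesis .
qed

lemma cheb_arith:
  assumes "1 < r" "0 \<le> C0"
  shows "(2::real)^j * C0 * ((2::real)^j) powr (2 - r) / ((2::real)^j)\<^sup>2 = C0 * (2 powr (1 - r))^j"
proof -
  define n where "n = (2::real)^j"
  have n0: "0 < n" unfolding n_def by simp
  have e1: "n = 2 powr real j" unfolding n_def by (simp add: powr_realpow)
  have "n * C0 * n powr (2 - r) / n\<^sup>2 = C0 * (n powr (2 - r) / n)"
    using n0 by (simp add: power2_eq_square)
  also have "n powr (2 - r) / n = n powr (2 - r) / n powr 1" using n0 by simp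
  also have "\<dots> = n powr ((2 - r) - 1)" by (rule powr_diff[symmetric])
  also have "\<dots> = n powr (1 - r)" by (simp add: algebra_simps)
  also have "\<dots> = 2 powr (real j * (1 - r))" unfolding e1 by (simp add: powr_powr)
  also have "\<dots> = (2 powr (1 - r))^j" by (simp add: powr_power)
  finally show ?thesis unfolding n_def .
qed

lemma core:
  fixes M :: "'w measure" and G :: "nat \<Rightarrow> 'w measure" and Y :: "nat \<Rightarrow> 'w \<Rightarrow> real"
  assumes prob: "prob_space M"
  and subalg: "\<And>t. subalgebra M (G t)"
  and mono: "\<And>t. sets (G t) \<subseteq> sets (G (Suc t))"
  and Ymeas: "\<And>t. Y t \<in> borel_measurable (G (Suc t))"
  and Ynn: "\<And>t \<omega>. 0 \<le> Y t \<omega>"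
  and r: "1 < r" "r \<le> 2"
  and K: "0 \<le> K"
  and cond: "\<And>t. AE \<omega> in M. nn_cond_exp M (G t) (\<lambda>\<omega>. ennreal (Y t \<omega> powr r)) \<omega> \<le> ennreal K"
  shows "AE \<omega> in M. \<exists>C. \<forall>T. (\<Sum>t<T. Y t \<omega>) \<le> C * (real T + 1)"
proof -
  interpret prob_space M by (rule prob)
  have YM[measurable]: "Y t \<in> borel_measurable M" for t using measurable_from_subalg[OF subalg Ymeas] .
  have mom: "(\<integral>\<^sup>+\<omega>. ennreal (Y t \<omega> powr r) \<partial>M) \<le> ennreal K" for t
    by (rule core_step12[of M G Y r K, OF prob subalg Ymeas Ynn r(1) K cond YM])
  have bc1: "AE \<omega> in M. eventually (\<lambda>t. Y t \<omega> \<le> real t + 1) sequentially"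
    by (rule core_bc1[of M Y r K, OF prob YM Ynn r(1) K mom])
  define Yp where "Yp t \<omega> = min (Y t \<omega>) (real t + 1)" for t \<omega>
  define rc where "rc t = real_cond_exp M (G t) (Yp t)" for t
  define m where "m t \<omega> = max 0 (min (1 + K) (rc t \<omega>))" for t \<omega>
  have YpG: "Yp t \<in> borel_measurable (G (Suc t))" for t
    unfolding Yp_def using Ymeas[of t] by measurable
  have YpM[measurable]: "Yp t \<in> borel_measurable M" for t using measurable_from_subalg[OF subalg YpG] .
  have mG: "m t \<in> borel_measurable (G t)" for t unfolding m_def rc_def by measurable
  have mM[measurable]: "m t \<in> borel_measurable M" for t using measurable_from_subalg[OF subalg mG] .
  have Ypb: "0 \<le> Yp t \<omega>" "Yp t \<omega> \<le> real t + 1" for t \<omega> unfolding Yp_def using Ynn[of t \<omega>] by auto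
  have mb: "0 \<le> m t \<omega>" "m t \<omega> \<le> 1 + K" for t \<omega> unfolding m_def using K by auto
  have rcpos: "AE \<omega> in M. 0 \<le> rc t \<omega>" for t
    unfolding rc_def by (rule sigma_finite_subalgebra.real_cond_exp_pos[OF sf_of[OF prob subalg]]) (auto simp: Ypb)
  have rcle: "AE \<omega> in M. rc t \<omega> \<le> 1 + K" for t
    unfolding rc_def by (rule core_condbound[of M "G t" "Y t" "Yp t" r K, OF prob subalg YM YpM _ _ cond K]) (auto simp: Yp_def pw1 Ynn r)
  have mae: "AE \<omega> in M. m t \<omega> = real_cond_exp M (G t) (Yp t) \<omega>" for t
    using rcpos[of t] rcle[of t] by eventually_elim (auto simp: m_def rc_def)
  define b where "b t = real t + 2 + K" for t
  have sq: "(\<integral>\<omega>. (\<Sum>t<n. Yp t \<omega> - m t \<omega>)\<^sup>2 \<partial>M) \<le> (\<Sum>t<n. \<integral>\<omega>. (Yp t \<omega> - m t \<omega>)\<^sup>2 \<partial>M)" for n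
  proof (rule sq_sum_bound[of M G Yp b m, OF prob subalg mono YpG _ mG _ mae])
    show "\<bar>Yp t \<omega>\<bar> \<le> b t" for t \<omega> using Ypb[of t \<omega>] K by (simp add: b_def)
    show "\<bar>m t \<omega>\<bar> \<le> b t" for t \<omega> using mb[of t \<omega>] K by (simp add: b_def)
  qed
  define C0 where "C0 = 2*K + 2*(1+K)\<^sup>2"
  have C00: "0 \<le> C0" unfolding C0_def using K by simp
  have d2: "(\<integral>\<omega>. (Yp t \<omega> - m t \<omega>)\<^sup>2 \<partial>M) \<le> C0 * (real t + 1) powr (2 - r)" for t
  proof -
    define c where "c = (real t + 1) powr (2 - r)"
    have c1: "1 \<le> c" unfolding c_def using r by (intro ge_one_powr_ge_zero) auto
    have int: "integrable M (\<lambda>\<omega>. (Yp t \<omega>)\<^sup>2)"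
      by (rule integrable_const_bound[where B="(real t + 1)\<^sup>2"]) (auto intro!: AE_I2 sq_le_of_abs simp: Ypb)
    have p1: "(\<integral>\<omega>. (Yp t \<omega>)\<^sup>2 \<partial>M) \<le> K * c"
    proof -
      have "ennreal (\<integral>\<omega>. (Yp t \<omega>)\<^sup>2 \<partial>M) = (\<integral>\<^sup>+\<omega>. ennreal ((Yp t \<omega>)\<^sup>2) \<partial>M)"
        by (rule nn_integral_eq_integral[symmetric]) (use int in auto)
      also have "\<dots> \<le> (\<integral>\<^sup>+\<omega>. ennreal (Y t \<omega> powr r) * ennreal c \<partial>M)"
      proof (intro nn_integral_mono)
        fix \<omega>
        have "(Yp t \<omega>)\<^sup>2 \<le> Y t \<omega> powr r * c"
          unfolding Yp_def c_def by (rule pw2) (use Ynn r in auto)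
        then have "ennreal ((Yp t \<omega>)\<^sup>2) \<le> ennreal (Y t \<omega> powr r * c)" by (rule ennreal_leI)
        also have "\<dots> = ennreal (Y t \<omega> powr r) * ennreal c" using c1 by (simp add: ennreal_mult)
        finally show "ennreal ((Yp t \<omega>)\<^sup>2) \<le> ennreal (Y t \<omega> powr r) * ennreal c" .
      qed
      also have "\<dots> = (\<integral>\<^sup>+\<omega>. ennreal (Y t \<omega> powr r) \<partial>M) * ennreal c" by (rule nn_integral_multc) auto
      also have "\<dots> \<le> ennreal K * ennreal c" by (rule mult_right_mono[OF mom]) auto
      also have "\<dots> = ennreal (K*c)" using K c1 by (simp add: ennreal_mult)
      finally show ?thesis using K c1 by (subst (asm) ennreal_le_iff) auto
    qed
    have pt: "(Yp t \<omega> - m t \<omega>)\<^sup>2 \<le> 2 * (Yp t \<omega>)\<^sup>2 + 2 * (1+K)\<^sup>2" for \<omega>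
    proof -
      have "(m t \<omega>)\<^sup>2 \<le> (1+K)\<^sup>2" by (rule power_mono) (use mb in auto)
      moreover have "(Yp t \<omega> - m t \<omega>)\<^sup>2 \<le> 2 * (Yp t \<omega>)\<^sup>2 + 2 * (m t \<omega>)\<^sup>2"
        using zero_le_square[of "Yp t \<omega> + m t \<omega>"] by (simp add: power2_eq_square algebra_simps)
      ultimately show ?thesis by linarith
    qed
    have int2: "integrable M (\<lambda>\<omega>. (Yp t \<omega> - m t \<omega>)\<^sup>2)"
    proof (rule integrable_const_bound[where B="2 * (real t + 1)\<^sup>2 + 2 * (1+K)\<^sup>2"])
      show "AE x in M. norm ((Yp t x - m t x)\<^sup>2) \<le> 2 * (real t + 1)\<^sup>2 + 2 * (1+K)\<^sup>2"
      proof (rule AE_I2)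
        fix x
        have "(Yp t x)\<^sup>2 \<le> (real t + 1)\<^sup>2" by (rule sq_le_of_abs) (simp add: Ypb)
        then show "norm ((Yp t x - m t x)\<^sup>2) \<le> 2 * (real t + 1)\<^sup>2 + 2 * (1+K)\<^sup>2"
          using pt[of x] by simp
      qed
    qed auto
    have "(\<integral>\<omega>. (Yp t \<omega> - m t \<omega>)\<^sup>2 \<partial>M) \<le> (\<integral>\<omega>. 2 * (Yp t \<omega>)\<^sup>2 + 2 * (1+K)\<^sup>2 \<partial>M)"
      by (rule integral_mono[OF int2]) (use int pt in auto)
    also have "\<dots> = 2 * (\<integral>\<omega>. (Yp t \<omega>)\<^sup>2 \<partial>M) + 2 * (1+K)\<^sup>2"
      using int by (simp add: prob_space)
    also have "\<dots> \<le> 2 * (K * c) + 2 * (1+K)\<^sup>2 * c"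
      using p1 c1 by (intro add_mono) (auto simp: mult_le_cancel_left1)
    also have "\<dots> = C0 * (real t + 1) powr (2 - r)" by (simp add: C0_def c_def algebra_simps)
    finally show ?thesis .
  qed
  define S where "S j \<omega> = (\<Sum>t<2^j. Yp t \<omega> - m t \<omega>)" for j \<omega>
  have SM[measurable]: "S j \<in> borel_measurable M" for j unfolding S_def by measurable
  have S2: "(\<integral>\<omega>. (S j \<omega>)\<^sup>2 \<partial>M) \<le> 2^j * C0 * ((2::real)^j) powr (2 - r)" for j
  proof -
    have "(\<integral>\<omega>. (S j \<omega>)\<^sup>2 \<partial>M) \<le> (\<Sum>t<2^j. \<integral>\<omega>. (Yp t \<omega> - m t \<omega>)\<^sup>2 \<partial>M)"
      unfolding S_def by (rule sq)
    also have "\<dots> \<le> (\<Sum>t<(2::nat)^j. C0 * ((2::real)^j) powr (2 - r))"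
    proof (rule sum_mono)
      fix t assume "t \<in> {..<(2::nat)^j}"
      then have "real t + 1 \<le> (2::real)^j"
        by (metis Suc_leI lessThan_iff of_nat_Suc of_nat_le_iff of_nat_numeral of_nat_power add.commute)
      then have "C0 * (real t + 1) powr (2 - r) \<le> C0 * ((2::real)^j) powr (2 - r)"
        using C00 r by (intro mult_left_mono powr_mono2) auto
      then show "(\<integral>\<omega>. (Yp t \<omega> - m t \<omega>)\<^sup>2 \<partial>M) \<le> C0 * ((2::real)^j) powr (2 - r)"
        using d2[of t] by linarith
    qed
    also have "\<dots> = 2^j * C0 * ((2::real)^j) powr (2 - r)" by simp
    finally show ?thesis .
  qed
  define A where "A j = {\<omega>\<in>space M. (2::real)^j \<le> \<bar>S j \<omega>\<bar>}" for j
  have Am[measurable]: "A j \<in> sets M" for j unfolding A_def by measurable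
  have Sb: "\<bar>S j \<omega>\<bar> \<le> (\<Sum>t<(2::nat)^j. 2 * b t)" for j \<omega>
    unfolding S_def
  proof (rule order_trans[OF sum_abs], rule sum_mono)
    fix t
    have "\<bar>Yp t \<omega>\<bar> \<le> b t" "\<bar>m t \<omega>\<bar> \<le> b t" using Ypb[of t \<omega>] mb[of t \<omega>] K by (auto simp: b_def)
    then show "\<bar>Yp t \<omega> - m t \<omega>\<bar> \<le> 2 * b t" by linarith
  qed
  have PA: "measure M (A j) \<le> C0 * (2 powr (1 - r))^j" for j
  proof -
    have int: "integrable M (\<lambda>\<omega>. (S j \<omega>)\<^sup>2)"
      by (rule integrable_const_bound[where B="(\<Sum>t<(2::nat)^j. 2 * b t)\<^sup>2"]) (auto intro!: AE_I2 sq_le_of_abs Sb)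
    have "measure M (A j) \<le> (\<integral>\<omega>. (S j \<omega>)\<^sup>2 \<partial>M) / ((2::real)^j)\<^sup>2"
      unfolding A_def by (rule second_moment_method) (use int in auto)
    also have "\<dots> \<le> 2^j * C0 * ((2::real)^j) powr (2 - r) / ((2::real)^j)\<^sup>2"
      by (rule divide_right_mono[OF S2]) simp
    also have "\<dots> = C0 * (2 powr (1 - r))^j" by (rule cheb_arith[OF r(1) C00])
    finally show ?thesis .
  qed
  have rho: "0 \<le> 2 powr (1 - r)" "(2::real) powr (1 - r) < 1" using r by (auto intro: powr_less_one)
  have "summable (\<lambda>j. C0 * (2 powr (1 - r))^j)"
    by (intro summable_mult summable_geometric) (use rho in auto)
  then have "summable (\<lambda>j. measure M (A j))"
    by (rule summable_comparison_test[rotated]) (use PA in auto)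
  then have bc2: "AE \<omega> in M. eventually (\<lambda>j. \<omega> \<in> space M - A j) sequentially"
    by (intro borel_cantelli_AE1) (auto simp: emeasure_eq_measure)
  show ?thesis using bc1 bc2 AE_space
  proof eventually_elim
    case (elim \<omega>)
    from elim(1) obtain t0 where t0: "\<And>t. t \<ge> t0 \<Longrightarrow> Y t \<omega> \<le> real t + 1" by (auto simp: eventually_sequentially)
    from elim(2) obtain j0 where j0: "\<And>j. j \<ge> j0 \<Longrightarrow> \<omega> \<in> space M - A j" by (auto simp: eventually_sequentially)
    show ?case
    proof (rule final_det[where Yp="\<lambda>t. Yp t \<omega>" and m="\<lambda>t. m t \<omega>" and B="1+K"])
      show "\<And>j. j \<ge> j0 \<Longrightarrow> \<bar>\<Sum>t<2^j. Yp t \<omega> - m t \<omega>\<bar> < 2^j"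
        using j0 elim(3) by (auto simp: A_def S_def not_le)
    qed (use t0 Ynn mb K in \<open>auto simp: Yp_def\<close>)
  qed
qed

lemma loc:
  fixes M :: "'w measure" and G :: "nat \<Rightarrow> 'w measure" and Z :: "nat \<Rightarrow> 'w \<Rightarrow> real"
    and V :: "nat \<Rightarrow> 'w \<Rightarrow> ennreal"
  assumes prob: "prob_space M"
  and subalg: "\<And>t. subalgebra M (G t)"
  and mono: "\<And>t. sets (G t) \<subseteq> sets (G (Suc t))"
  and Zmeas: "\<And>t. Z t \<in> borel_measurable (G (Suc t))"
  and Znn: "\<And>t \<omega>. 0 \<le> Z t \<omega>"
  and r: "1 < r" "r \<le> 2"
  and Vm: "\<And>t. V t \<in> borel_measurable M"
  and ZV: "\<And>t \<omega>. ennreal (Z t \<omega> powr r) \<le> 1 + V t \<omega>"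
  and sup: "AE \<omega> in M. (SUP t. nn_cond_exp M (G t) (V t) \<omega>) < \<infinity>"
  shows "AE \<omega> in M. \<exists>C. \<forall>T. (\<Sum>t<T. Z t \<omega>) \<le> C * (real T + 1)"
proof -
  have sp: "space (G t) = space M" for t using subalg[of t] by (simp add: subalgebra_def)
  define I where "I k t \<omega> = (if nn_cond_exp M (G t) (V t) \<omega> \<le> of_nat k then 1 else (0::real))" for k t \<omega>
  define Yk where "Yk k t \<omega> = Z t \<omega> * I k t \<omega>" for k t \<omega>
  have IG: "I k t \<in> borel_measurable (G t)" for k t unfolding I_def by measurable
  have IG': "I k t \<in> borel_measurable (G (Suc t))" for k t
    by (rule meas_filt_le[of G t "Suc t", OF mono _ sp IG]) auto
  have YG: "Yk k t \<in> borel_measurable (G (Suc t))" for k t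
    unfolding Yk_def using Zmeas[of t] IG'[of k t] by measurable
  have ZM[measurable]: "Z t \<in> borel_measurable M" for t using measurable_from_subalg[OF subalg Zmeas] .
  have VM[measurable]: "V t \<in> borel_measurable M" for t by (rule Vm)
  have each: "AE \<omega> in M. \<exists>C. \<forall>T. (\<Sum>t<T. Yk k t \<omega>) \<le> C * (real T + 1)" for k
  proof (rule core[of M G "Yk k" r "1 + real k", OF prob subalg mono YG _ r])
    show "0 \<le> Yk k t \<omega>" for t \<omega> unfolding Yk_def I_def using Znn[of t \<omega>] by auto
    show "0 \<le> 1 + real k" by simp
    fix t
    interpret sigma_finite_subalgebra M "G t" by (rule sf_of[OF prob subalg])
    define f where "f \<omega> = ennreal (I k t \<omega>)" for \<omega>
    have fG[measurable]: "f \<in> borel_measurable (G t)" unfolding f_def using IG[of k t] by measurable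
    have fM[measurable]: "f \<in> borel_measurable M" using measurable_from_subalg[OF subalg fG] .
    have a1: "AE \<omega> in M. nn_cond_exp M (G t) (\<lambda>\<omega>. ennreal (Yk k t \<omega> powr r)) \<omega>
        \<le> nn_cond_exp M (G t) (\<lambda>\<omega>. f \<omega> * (1 + V t \<omega>)) \<omega>"
    proof (rule nn_cond_exp_mono)
      show "AE x in M. ennreal (Yk k t x powr r) \<le> f x * (1 + V t x)"
        by (intro AE_I2) (auto simp: Yk_def f_def I_def ZV)
      have [measurable]: "Yk k t \<in> borel_measurable M" by (rule measurable_from_subalg[OF assms(2)[of "Suc t"] YG[of k t]])
      show "(\<lambda>\<omega>. ennreal (Yk k t \<omega> powr r)) \<in> borel_measurable M" by measurable
    qed auto
    have a2: "AE \<omega> in M. f \<omega> * nn_cond_exp M (G t) (\<lambda>\<omega>. 1 + V t \<omega>) \<omega> = nn_cond_exp M (G t) (\<lambda>\<omega>. f \<omega> * (1 + V t \<omega>)) \<omega>"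
      by (rule nn_cond_exp_prod) auto
    have a3: "AE \<omega> in M. nn_cond_exp M (G t) (\<lambda>\<omega>. 1) \<omega> + nn_cond_exp M (G t) (V t) \<omega> = nn_cond_exp M (G t) (\<lambda>\<omega>. 1 + V t \<omega>) \<omega>"
      by (rule nn_cond_exp_sum) auto
    have a4: "AE \<omega> in M. (\<lambda>\<omega>. 1::ennreal) \<omega> = nn_cond_exp M (G t) (\<lambda>\<omega>. 1) \<omega>"
      by (rule nn_cond_exp_F_meas) auto
    show "AE \<omega> in M. nn_cond_exp M (G t) (\<lambda>\<omega>. ennreal (Yk k t \<omega> powr r)) \<omega> \<le> ennreal (1 + real k)"
      using a1 a2 a3 a4
    proof eventually_elim
      case (elim \<omega>)
      have "f \<omega> * nn_cond_exp M (G t) (\<lambda>\<omega>. 1 + V t \<omega>) \<omega> \<le> ennreal (1 + real k)"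
      proof (cases "nn_cond_exp M (G t) (V t) \<omega> \<le> of_nat k")
        case True
        then have "f \<omega> = 1" by (simp add: f_def I_def)
        moreover have "nn_cond_exp M (G t) (\<lambda>\<omega>. 1 + V t \<omega>) \<omega> = 1 + nn_cond_exp M (G t) (V t) \<omega>"
          using elim(3,4) by simp
        moreover have "1 + nn_cond_exp M (G t) (V t) \<omega> \<le> 1 + of_nat k" using True by (rule add_left_mono)
        ultimately show ?thesis by (simp add: ennreal_plus ennreal_of_nat_eq_real_of_nat[symmetric])
      next
        case False
        then have "f \<omega> = 0" by (simp add: f_def I_def)
        then show ?thesis by simp
      qed
      then show ?case using elim(1,2) by simp
    qed
  qed
  have all: "AE \<omega> in M. \<forall>k. \<exists>C. \<forall>T. (\<Sum>t<T. Yk k t \<omega>) \<le> C * (real T + 1)"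
    using each by (subst AE_all_countable) auto
  show ?thesis using all sup
  proof eventually_elim
    case (elim \<omega>)
    obtain k :: nat where k: "(SUP t. nn_cond_exp M (G t) (V t) \<omega>) \<le> of_nat k"
    proof -
      obtain x where x: "(SUP t. nn_cond_exp M (G t) (V t) \<omega>) = ennreal x" "0 \<le> x"
        using elim(2) by (cases "(SUP t. nn_cond_exp M (G t) (V t) \<omega>)") auto
      obtain k :: nat where "x \<le> real k" using real_arch_simple by blast
      then have "(SUP t. nn_cond_exp M (G t) (V t) \<omega>) \<le> of_nat k"
        using x by (simp add: ennreal_of_nat_eq_real_of_nat)
      then show ?thesis using that by blast
    qed
    have "nn_cond_exp M (G t) (V t) \<omega> \<le> of_nat k" for t
      by (rule order_trans[OF SUP_upper k]) simp
    then have e: "Yk k t \<omega> = Z t \<omega>" for t by (simp add: Yk_def I_def)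
    from elim(1) obtain C where "\<forall>T. (\<Sum>t<T. Yk k t \<omega>) \<le> C * (real T + 1)" by blast
    then show ?case unfolding e by blast
  qed
qed

lemma norm_transpose: "norm (transpose (A::real^'n^'m)) = norm A"
proof -
  have "transpose A \<bullet> transpose A = (\<Sum>i\<in>UNIV. \<Sum>j\<in>UNIV. A$j$i * A$j$i)"
    by (simp add: inner_vec_def transpose_def)
  also have "\<dots> = (\<Sum>j\<in>UNIV. \<Sum>i\<in>UNIV. A$j$i * A$j$i)" by (rule sum.swap)
  also have "\<dots> = A \<bullet> A" by (simp add: inner_vec_def)
  finally show ?thesis by (simp add: norm_eq_sqrt_inner)
qed

lemma is_norm_sum:
  assumes N: "is_norm N" and "finite S"
  shows "N (sum f S) \<le> (\<Sum>i\<in>S. N (f i))"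
  using assms(2)
proof (induction S rule: finite_induct)
  case empty
  have "N 0 = 0" using N unfolding is_norm_def by blast
  then show ?case by simp
next
  case (insert x F)
  have "N (f x + sum f F) \<le> N (f x) + N (sum f F)" using N unfolding is_norm_def by blast
  then show ?case using insert by simp
qed

lemma norm_equiv:
  fixes N :: "'a::euclidean_space \<Rightarrow> real"
  assumes N: "is_norm N"
  shows "\<exists>a b. 0 < a \<and> 0 < b \<and> (\<forall>v. norm v \<le> a * N v) \<and> (\<forall>v. N v \<le> b * norm v)"
proof -
  have Nnn: "0 \<le> N v" for v using N unfolding is_norm_def by blast
  have Nz: "N v = 0 \<longleftrightarrow> v = 0" for v using N unfolding is_norm_def by blast
  have Nh: "N (c *\<^sub>R v) = \<bar>c\<bar> * N v" for c v using N unfolding is_norm_def by blast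
  have Nt: "N (v + w) \<le> N v + N w" for v w using N unfolding is_norm_def by blast
  define b where "b = (\<Sum>i\<in>Basis. N i) + 1"
  have b0: "0 < b" unfolding b_def using Nnn by (simp add: add_nonneg_pos sum_nonneg)
  have up: "N v \<le> b * norm v" for v
  proof -
    have "N v = N (\<Sum>i\<in>Basis. (v \<bullet> i) *\<^sub>R i)" by (simp add: euclidean_representation)
    also have "\<dots> \<le> (\<Sum>i\<in>Basis. N ((v \<bullet> i) *\<^sub>R i))" by (rule is_norm_sum[OF N]) simp
    also have "\<dots> = (\<Sum>i\<in>Basis. \<bar>v \<bullet> i\<bar> * N i)" by (simp add: Nh)
    also have "\<dots> \<le> (\<Sum>i\<in>Basis. norm v * N i)"
      by (intro sum_mono mult_right_mono Basis_le_norm Nnn)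
    also have "\<dots> = norm v * (\<Sum>i\<in>Basis. N i)" by (simp add: sum_distrib_left)
    also have "\<dots> \<le> norm v * b" unfolding b_def by (simp add: distrib_left)
    finally show ?thesis by (simp add: mult.commute)
  qed
  have lip: "dist (N x) (N y) \<le> b * dist x y" for x y
  proof -
    have "N x \<le> N (x - y) + N y" using Nt[of "x - y" y] by simp
    moreover have "N y \<le> N (y - x) + N x" using Nt[of "y - x" x] by simp
    moreover have "N (y - x) = N (x - y)" using Nh[of "-1" "x - y"] by simp
    ultimately have "\<bar>N x - N y\<bar> \<le> N (x - y)" by linarith
    then show ?thesis using up[of "x - y"] by (simp add: dist_real_def dist_norm)
  qed
  have cont: "continuous_on (sphere 0 1) N"
    by (rule lipschitz_on_continuous_on[OF lipschitz_onI[OF lip]]) (use b0 in auto)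
  obtain v0 where v0: "v0 \<in> sphere 0 1" "\<And>v. v \<in> sphere 0 1 \<Longrightarrow> N v0 \<le> N v"
    using continuous_attains_inf[OF compact_sphere _ cont] by (auto simp: sphere_eq_empty)
  have m0: "0 < N v0" using v0(1) Nz[of v0] Nnn[of v0] by auto
  have lo: "norm v \<le> (1 / N v0) * N v" for v
  proof (cases "v = 0")
    case True then show ?thesis using Nnn[of 0] m0 by simp
  next
    case False
    then have "(1 / norm v) *\<^sub>R v \<in> sphere 0 1" by simp
    then have "N v0 \<le> N ((1 / norm v) *\<^sub>R v)" by (rule v0(2))
    also have "\<dots> = N v / norm v" by (simp add: Nh)
    finally have "N v0 * norm v \<le> N v" using False by (simp add: field_simps)
    then show ?thesis using m0 by (simp add: field_simps)
  qed
  show ?thesis using m0 b0 lo up by (intro exI[of _ "1 / N v0"] exI[of _ b]) auto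
qed

lemma step_pow:
  fixes n e \<rho> p :: real
  assumes "0 \<le> n" "0 \<le> e" "0 < \<rho>" "\<rho> < 1" "1 \<le> p"
  shows "(\<rho> * n + e) powr p \<le> ((1 + \<rho>)/2) * n powr p + ((2 * \<rho>/(1 - \<rho>) + 1) powr p) * e powr p"
proof -
  define \<delta> where "\<delta> = (1 - \<rho>)/2"
  define l where "l = (1 + \<rho>)/2"
  have d0: "0 < \<delta>" "\<rho> + \<delta> = l" "0 < l" "l \<le> 1" using assms unfolding \<delta>_def l_def by (auto simp: field_simps)
  have c: "2 * \<rho>/(1 - \<rho>) = \<rho> / \<delta>" unfolding \<delta>_def by simp
  show ?thesis
  proof (cases "e \<le> \<delta> * n")
    case True
    have "l * n = \<rho> * n + \<delta> * n" using d0(2) by (metis distrib_right)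
    then have "\<rho> * n + e \<le> l * n" using True by linarith
    then have "(\<rho> * n + e) powr p \<le> (l * n) powr p"
      by (intro powr_mono2) (use assms in auto)
    also have "\<dots> = l powr p * n powr p" using d0 assms by (simp add: powr_mult)
    also have "\<dots> \<le> l * n powr p"
    proof (rule mult_right_mono)
      have "l powr p \<le> l powr 1" by (rule powr_mono') (use d0 assms in auto)
      then show "l powr p \<le> l" using d0 by simp
    qed simp
    also have "\<dots> \<le> l * n powr p + (\<rho>/\<delta> + 1) powr p * e powr p"
      by (intro add_increasing2) auto
    finally show ?thesis unfolding l_def c .
  next
    case False
    then have "\<rho> * n \<le> (\<rho>/\<delta>) * e" using d0 assms
      by (simp add: field_simps)
    then have "\<rho> * n + e \<le> (\<rho>/\<delta> + 1) * e" by (simp add: algebra_simps)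
    then have "(\<rho> * n + e) powr p \<le> ((\<rho>/\<delta> + 1) * e) powr p"
      by (intro powr_mono2) (use assms in auto)
    also have "\<dots> = (\<rho>/\<delta> + 1) powr p * e powr p" using d0 assms by (simp add: powr_mult)
    also have "\<dots> \<le> ((1 + \<rho>)/2) * n powr p + (\<rho>/\<delta> + 1) powr p * e powr p"
      by (intro add_increasing) (use assms in auto)
    finally show ?thesis unfolding c .
  qed
qed

lemma rec_sum:
  fixes n e :: "nat \<Rightarrow> real"
  assumes \<rho>: "0 < \<rho>" "\<rho> < 1" and p: "1 \<le> p"
    and nn: "\<And>t. 0 \<le> n t" and en: "\<And>t. 0 \<le> e t"
    and step: "\<And>t. n (Suc t) \<le> \<rho> * n t + e t"
    and sumE: "\<And>T. (\<Sum>t<T. e t powr p) \<le> C * (real T + 1)"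
  shows "\<exists>C'. \<forall>T. (\<Sum>t<T. n t powr p) \<le> C' * (real T + 1)"
proof -
  define l where "l = (1 + \<rho>)/2"
  define c where "c = (2 * \<rho>/(1 - \<rho>) + 1) powr p"
  have l: "0 < l" "l < 1" unfolding l_def using \<rho> by auto
  have c0: "0 \<le> c" unfolding c_def by simp
  have C0: "0 \<le> C" using sumE[of 0] by simp
  have st: "n (Suc t) powr p \<le> l * n t powr p + c * e t powr p" for t
  proof -
    have "n (Suc t) powr p \<le> (\<rho> * n t + e t) powr p"
      by (intro powr_mono2) (use p nn step in auto)
    also have "\<dots> \<le> l * n t powr p + c * e t powr p"
      unfolding l_def c_def by (rule step_pow) (use nn en \<rho> p in auto)
    finally show ?thesis .
  qed
  have "(\<Sum>t<T. n t powr p) \<le> (n 0 powr p + c * C) / (1 - l) * (real T + 1)" for T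
  proof -
    have "(\<Sum>t<T. n t powr p) \<le> (\<Sum>t<Suc T. n t powr p)" by (simp add: sum.lessThan_Suc)
    also have "\<dots> = n 0 powr p + (\<Sum>t<T. n (Suc t) powr p)" by (rule sum.lessThan_Suc_shift)
    also have "(\<Sum>t<T. n (Suc t) powr p) \<le> (\<Sum>t<T. l * n t powr p + c * e t powr p)"
      by (intro sum_mono st)
    also have "\<dots> = l * (\<Sum>t<T. n t powr p) + c * (\<Sum>t<T. e t powr p)"
      by (simp add: sum.distrib sum_distrib_left)
    also have "c * (\<Sum>t<T. e t powr p) \<le> c * (C * (real T + 1))"
      by (rule mult_left_mono[OF sumE c0])
    finally have "(1 - l) * (\<Sum>t<T. n t powr p) \<le> n 0 powr p + c * C * (real T + 1)"
      by (simp add: algebra_simps)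
    also have "\<dots> \<le> (n 0 powr p + c * C) * (real T + 1)"
      using c0 C0 by (simp add: algebra_simps)
    finally show ?thesis using l by (simp add: field_simps)
  qed
  then show ?thesis by blast
qed

lemma sum2_powr:
  fixes a b p :: real
  assumes "0 \<le> a" "0 \<le> b" "0 < p"
  shows "(a + b) powr p \<le> 2 powr p * (a powr p + b powr p)"
proof -
  have "a + b \<le> 2 * max a b" by simp
  then have "(a + b) powr p \<le> (2 * max a b) powr p" by (intro powr_mono2) (use assms in auto)
  also have "\<dots> = 2 powr p * max a b powr p" using assms by (simp add: powr_mult)
  also have "max a b powr p \<le> a powr p + b powr p" by (simp add: max_def)
  finally show ?thesis by simp
qed

lemma part1_sum:
  fixes M :: "'w measure" and F :: "nat \<Rightarrow> 'w measure"
    and h :: "real^'p \<Rightarrow> real^'n \<Rightarrow> real^'m \<Rightarrow> real^'n"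
    and ths :: "real^'p"
    and x w :: "nat \<Rightarrow> 'w \<Rightarrow> real^'n"
    and u eps :: "nat \<Rightarrow> 'w \<Rightarrow> real^'m"
    and pol :: "real^'n \<Rightarrow> real^'m"
    and q Lpi epsbar \<gamma> :: real
  assumes prob: "prob_space M"
    and subalg: "\<And>t. subalgebra M (F t)"
    and filt_mono: "\<And>t. sets (F t) \<subseteq> sets (F (Suc t))"
    and dyn: "\<And>t \<omega>. \<omega> \<in> space M \<Longrightarrow> x (Suc t) \<omega> = h ths (x t \<omega>) (u t \<omega>) + w (Suc t) \<omega>"
    and inp: "\<And>t \<omega>. \<omega> \<in> space M \<Longrightarrow> u t \<omega> = pol (x t \<omega>) + eps t \<omega>"
    and q_gt: "q > 2"
    and w_meas: "\<And>t. w (Suc t) \<in> borel_measurable (F (Suc t))"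
    and w_mom: "AE \<omega> in M. (SUP t. nn_cond_exp M (F t)
                  (\<lambda>\<omega>. ennreal (norm (w (Suc t) \<omega>) powr q)) \<omega>) < \<infinity>"
    and pol_lip: "\<And>a b. norm (pol a - pol b) \<le> Lpi * norm (a - b)"
    and eps_bd: "\<And>t \<omega>. \<omega> \<in> space M \<Longrightarrow> norm (eps t \<omega>) \<le> epsbar"
    and stable: "\<exists>\<rho> N. 0 < \<rho> \<and> \<rho> < 1 \<and> is_norm N \<and>
                  (\<forall>t. \<forall>\<omega>\<in>space M. N (h ths (x t \<omega>) (u t \<omega>)) \<le> \<rho> * N (x t \<omega>))"
    and \<gamma>: "0 < \<gamma>" "\<gamma> < q - 2"
  shows "AE \<omega> in M. \<exists>C. \<forall>T. (\<Sum>t<T. norm (x t \<omega>, u t \<omega>) powr (2 + \<gamma>)) \<le> C * (real T + 1)"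
proof -
  define p where "p = 2 + \<gamma>"
  define r where "r = min 2 (q / p)"
  have p0: "0 < p" "1 \<le> p" "p < q" using \<gamma> unfolding p_def by auto
  have r1: "1 < r" "r \<le> 2" unfolding r_def using p0 q_gt by (auto simp: field_simps)
  have pr: "p * r \<le> q" unfolding r_def using p0 by (auto simp: field_simps min_def)
  define Z where "Z t \<omega> = norm (w (Suc t) \<omega>) powr p" for t \<omega>
  define V where "V t \<omega> = ennreal (norm (w (Suc t) \<omega>) powr q)" for t \<omega>
  have ZG: "Z t \<in> borel_measurable (F (Suc t))" for t unfolding Z_def using w_meas[of t] by measurable
  have wM[measurable]: "w (Suc t) \<in> borel_measurable M" for t using measurable_from_subalg[OF subalg w_meas] .
  have VM: "V t \<in> borel_measurable M" for t unfolding V_def by measurable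
  have ZV: "ennreal (Z t \<omega> powr r) \<le> 1 + V t \<omega>" for t \<omega>
  proof -
    define a where "a = norm (w (Suc t) \<omega>)"
    have a0: "0 \<le> a" unfolding a_def by simp
    have "Z t \<omega> powr r = a powr (p * r)" unfolding Z_def a_def by (simp add: powr_powr)
    also have "\<dots> \<le> 1 + a powr q"
    proof (cases "a \<le> 1")
      case True
      then have "a powr (p * r) \<le> 1" by (intro powr_le1) (use a0 p0 r1 in auto)
      then show ?thesis by (smt (verit) powr_ge_zero)
    next
      case False
      then have "a powr (p * r) \<le> a powr q" by (intro powr_mono pr) auto
      then show ?thesis by simp
    qed
    finally have "ennreal (Z t \<omega> powr r) \<le> ennreal (1 + a powr q)" by (rule ennreal_leI)
    also have "\<dots> = 1 + V t \<omega>" unfolding V_def a_def by (simp add: ennreal_plus)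
    finally show ?thesis .
  qed
  have Zsum: "AE \<omega> in M. \<exists>C. \<forall>T. (\<Sum>t<T. Z t \<omega>) \<le> C * (real T + 1)"
    by (rule loc[of M F Z r V, OF prob subalg filt_mono ZG _ r1 VM ZV])
       (use w_mom in \<open>unfold V_def, simp_all add: Z_def\<close>)
  obtain \<rho> N where \<rho>: "0 < \<rho>" "\<rho> < 1" and Nn: "is_norm N"
    and Nst: "\<And>t \<omega>. \<omega> \<in> space M \<Longrightarrow> N (h ths (x t \<omega>) (u t \<omega>)) \<le> \<rho> * N (x t \<omega>)"
    using stable by blast
  obtain a b where ab: "0 < a" "0 < b" "\<And>v. norm v \<le> a * N v" "\<And>v. N v \<le> b * norm v"
    using norm_equiv[OF Nn] by blast
  have Nnn: "0 \<le> N v" for v using Nn unfolding is_norm_def by blast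
  have Nt: "N (v + v') \<le> N v + N v'" for v v' using Nn unfolding is_norm_def by blast
  define A0 where "A0 = norm (pol 0) + \<bar>epsbar\<bar>"
  define B0 where "B0 = 1 + \<bar>Lpi\<bar>"
  have xi: "norm (x t \<omega>, u t \<omega>) \<le> A0 + B0 * a * N (x t \<omega>)" if "\<omega> \<in> space M" for t \<omega>
  proof -
    have "norm (pol (x t \<omega>) - pol 0) \<le> Lpi * norm (x t \<omega>)" using pol_lip[of "x t \<omega>" 0] by simp
    also have "\<dots> \<le> \<bar>Lpi\<bar> * norm (x t \<omega>)" by (intro mult_right_mono) auto
    finally have pl: "norm (pol (x t \<omega>)) \<le> norm (pol 0) + \<bar>Lpi\<bar> * norm (x t \<omega>)"
      using norm_triangle_ineq2[of "pol (x t \<omega>)" "pol 0"] by linarith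
    have "norm (u t \<omega>) \<le> norm (pol (x t \<omega>)) + norm (eps t \<omega>)"
      unfolding inp[OF that] by (rule norm_triangle_ineq)
    also have "\<dots> \<le> norm (pol 0) + \<bar>Lpi\<bar> * norm (x t \<omega>) + \<bar>epsbar\<bar>"
      using pl eps_bd[OF that, of t] by linarith
    finally have "norm (x t \<omega>, u t \<omega>) \<le> A0 + B0 * norm (x t \<omega>)"
      using norm_Pair_le[of "x t \<omega>" "u t \<omega>"] unfolding A0_def B0_def by (simp add: algebra_simps)
    also have "B0 * norm (x t \<omega>) \<le> B0 * (a * N (x t \<omega>))"
      by (intro mult_left_mono ab(3)) (simp add: B0_def)
    finally show ?thesis by (simp add: mult.assoc)
  qed
  show ?thesis using Zsum AE_space
  proof eventually_elim
    case (elim \<omega>)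
    then obtain C where C: "\<And>T. (\<Sum>t<T. Z t \<omega>) \<le> C * (real T + 1)" by blast
    have sp: "\<omega> \<in> space M" by (rule elim(2))
    define nn where "nn t = N (x t \<omega>)" for t
    define e where "e t = b * norm (w (Suc t) \<omega>)" for t
    have step: "nn (Suc t) \<le> \<rho> * nn t + e t" for t
    proof -
      have "nn (Suc t) \<le> N (h ths (x t \<omega>) (u t \<omega>)) + N (w (Suc t) \<omega>)"
        unfolding nn_def dyn[OF sp] by (rule Nt)
      then show ?thesis using Nst[OF sp, of t] ab(4)[of "w (Suc t) \<omega>"] unfolding nn_def e_def by linarith
    qed
    have sumE: "(\<Sum>t<T. e t powr p) \<le> (b powr p * C) * (real T + 1)" for T
    proof -
      have "(\<Sum>t<T. e t powr p) = b powr p * (\<Sum>t<T. Z t \<omega>)"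
        unfolding e_def Z_def using ab(2) by (simp add: powr_mult sum_distrib_left)
      also have "\<dots> \<le> b powr p * (C * (real T + 1))" by (intro mult_left_mono C) simp
      finally show ?thesis by (simp add: mult.assoc)
    qed
    obtain C' where C': "\<And>T. (\<Sum>t<T. nn t powr p) \<le> C' * (real T + 1)"
      using rec_sum[OF \<rho> p0(2) _ _ step sumE] Nnn ab(2) unfolding nn_def e_def by force
    have C'0: "0 \<le> C'" using C'[of 0] by simp
    define K1 where "K1 = 2 powr p * A0 powr p"
    define K2 where "K2 = 2 powr p * (B0 * a) powr p"
    have A00: "0 \<le> A0" unfolding A0_def by simp
    have B00: "0 \<le> B0 * a" unfolding B0_def using ab by simp
    have pt: "norm (x t \<omega>, u t \<omega>) powr p \<le> K1 + K2 * nn t powr p" for t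
    proof -
      have "norm (x t \<omega>, u t \<omega>) powr p \<le> (A0 + B0 * a * nn t) powr p"
        unfolding nn_def by (intro powr_mono2 xi[OF sp]) (use p0 in auto)
      also have "\<dots> \<le> 2 powr p * (A0 powr p + (B0 * a * nn t) powr p)"
        by (rule sum2_powr) (use A00 B00 Nnn p0 in \<open>auto simp: nn_def\<close>)
      also have "(B0 * a * nn t) powr p = (B0 * a) powr p * nn t powr p"
        using B00 Nnn by (simp add: powr_mult nn_def)
      finally show ?thesis by (simp add: K1_def K2_def algebra_simps)
    qed
    have K0: "0 \<le> K1" "0 \<le> K2" unfolding K1_def K2_def by auto
    show ?case
    proof (intro exI allI)
      fix T
      have "(\<Sum>t<T. norm (x t \<omega>, u t \<omega>) powr (2 + \<gamma>)) \<le> (\<Sum>t<T. K1 + K2 * nn t powr p)"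
        using pt unfolding p_def by (intro sum_mono) auto
      also have "\<dots> = K1 * real T + K2 * (\<Sum>t<T. nn t powr p)" by (simp add: sum.distrib sum_distrib_left)
      also have "\<dots> \<le> K1 * (real T + 1) + K2 * (C' * (real T + 1))"
        by (intro add_mono mult_left_mono C' K0) auto
      also have "\<dots> = (K1 + K2 * C') * (real T + 1)" by (simp add: algebra_simps)
      finally show "(\<Sum>t<T. norm (x t \<omega>, u t \<omega>) powr (2 + \<gamma>)) \<le> (K1 + K2 * C') * (real T + 1)" .
    qed
  qed
qed

lemma sq_le_powr: assumes "0 \<le> (s::real)" "2 \<le> p" shows "s\<^sup>2 \<le> 1 + s powr p"
proof (cases "s \<le> 1")
  case True
  then have "s\<^sup>2 \<le> 1" using assms by (simp add: power_le_one)
  then show ?thesis by (smt (verit) powr_ge_zero)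
next
  case False
  then have "s powr 2 \<le> s powr p" by (intro powr_mono) (use assms in auto)
  then show ?thesis using False by (simp add: powr_numeral)
qed

lemma part2:
  fixes M :: "'w measure"
    and J :: "real^'p \<Rightarrow> real^'n \<Rightarrow> real^'m \<Rightarrow> real^'p^'n"
    and ths :: "real^'p"
    and x :: "nat \<Rightarrow> 'w \<Rightarrow> real^'n"
    and u :: "nat \<Rightarrow> 'w \<Rightarrow> real^'m"
    and th :: "nat \<Rightarrow> 'w \<Rightarrow> real^'p"
    and D p :: real
  assumes P1: "AE \<omega> in M. \<exists>C. \<forall>T. (\<Sum>t<T. norm (x t \<omega>, u t \<omega>) powr p) \<le> C * (real T + 1)"
    and p2: "2 \<le> p"
    and thsD: "norm ths \<le> D"
    and contJ: "\<forall>t. \<forall>\<omega>\<in>space M. continuous_on UNIV (\<lambda>\<theta>. J \<theta> (x t \<omega>) (u t \<omega>))"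
    and lipJ: "\<forall>r>0. \<exists>Mr>0. \<forall>\<theta> a1 b1 a2 b2. norm (\<theta> - ths) \<le> r \<longrightarrow>
                 norm (J \<theta> a1 b1 - J \<theta> a2 b2) \<le> Mr * norm ((a1, b1) - (a2, b2))"
    and projD: "\<forall>\<omega>\<in>space M. \<forall>t. norm (th (Suc t) \<omega>) \<le> D"
  shows "AE \<omega> in M. (\<lambda>T. \<Sum>i\<le>T. (norm (transpose (J (th i \<omega>) (x i \<omega>) (u i \<omega>))))\<^sup>2)
                            \<in> O(\<lambda>T. real T)"
  using P1 AE_space
proof eventually_elim
  case (elim \<omega>)
  then obtain C where C: "\<And>T. (\<Sum>t<T. norm (x t \<omega>, u t \<omega>) powr p) \<le> C * (real T + 1)" by blast
  have sp: "\<omega> \<in> space M" by (rule elim(2))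
  have C0: "0 \<le> C" using C[of 0] by simp
  define r where "r = max (2 * D) (norm (th 0 \<omega> - ths)) + 1"
  have r0: "0 < r" unfolding r_def by (smt (verit) norm_ge_zero)
  have thr: "norm (th i \<omega> - ths) \<le> r" for i
  proof (cases i)
    case 0 then show ?thesis unfolding r_def by simp
  next
    case (Suc j)
    have "norm (th i \<omega> - ths) \<le> norm (th i \<omega>) + norm ths" by (rule norm_triangle_ineq4)
    also have "\<dots> \<le> 2 * D"
    proof -
      have "norm (th (Suc j) \<omega>) \<le> D" using projD sp by blast
      then show ?thesis using thsD unfolding Suc by linarith
    qed
    finally show ?thesis unfolding r_def by simp
  qed
  obtain Mr where Mr: "0 < Mr" "\<And>\<theta> a1 b1 a2 b2. norm (\<theta> - ths) \<le> r \<Longrightarrow>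
                 norm (J \<theta> a1 b1 - J \<theta> a2 b2) \<le> Mr * norm ((a1, b1) - (a2, b2))"
    using lipJ r0 by blast
  define g where "g \<theta> = J \<theta> (x 0 \<omega>) (u 0 \<omega>)" for \<theta>
  have "compact (g ` cball ths r)"
    by (rule compact_continuous_image[OF continuous_on_subset[of UNIV] compact_cball])
       (use contJ sp in \<open>auto simp: g_def\<close>)
  then obtain B where B: "\<And>\<theta>. \<theta> \<in> cball ths r \<Longrightarrow> norm (g \<theta>) \<le> B"
    using compact_imp_bounded bounded_iff by (metis imageI)
  define c0 where "c0 = norm (x 0 \<omega>, u 0 \<omega>)"
  define s where "s i = norm (x i \<omega>, u i \<omega>)" for i
  have Jb: "norm (transpose (J (th i \<omega>) (x i \<omega>) (u i \<omega>))) \<le> (B + Mr * c0) + Mr * s i" for i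
  proof -
    have inb: "th i \<omega> \<in> cball ths r" using thr[of i] by (simp add: dist_norm norm_minus_commute)
    have "norm (J (th i \<omega>) (x i \<omega>) (u i \<omega>)) \<le> norm (g (th i \<omega>)) + norm (J (th i \<omega>) (x i \<omega>) (u i \<omega>) - g (th i \<omega>))"
      by (rule norm_triangle_sub)
    also have "norm (J (th i \<omega>) (x i \<omega>) (u i \<omega>) - g (th i \<omega>)) \<le> Mr * norm ((x i \<omega>, u i \<omega>) - (x 0 \<omega>, u 0 \<omega>))"
      unfolding g_def by (rule Mr(2)[OF thr])
    also have "norm ((x i \<omega>, u i \<omega>) - (x 0 \<omega>, u 0 \<omega>)) \<le> s i + c0"
      unfolding s_def c0_def by (rule norm_triangle_ineq4)
    finally have "norm (J (th i \<omega>) (x i \<omega>) (u i \<omega>)) \<le> B + Mr * (s i + c0)"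
      using B[OF inb] Mr(1) by (smt (verit) mult_left_mono)
    then show ?thesis by (simp add: norm_transpose algebra_simps)
  qed
  define K1 where "K1 = 2 * (B + Mr * c0)\<^sup>2 + 2 * Mr\<^sup>2"
  define K2 where "K2 = 2 * Mr\<^sup>2"
  have K0: "0 \<le> K1" "0 \<le> K2" unfolding K1_def K2_def by auto
  have pt: "(norm (transpose (J (th i \<omega>) (x i \<omega>) (u i \<omega>))))\<^sup>2 \<le> K1 + K2 * s i powr p" for i
  proof -
    have s0: "0 \<le> s i" unfolding s_def by simp
    have "(norm (transpose (J (th i \<omega>) (x i \<omega>) (u i \<omega>))))\<^sup>2 \<le> ((B + Mr * c0) + Mr * s i)\<^sup>2"
      by (rule power_mono[OF Jb]) simp
    also have "\<dots> \<le> 2 * (B + Mr * c0)\<^sup>2 + 2 * Mr\<^sup>2 * (s i)\<^sup>2"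
      using zero_le_square[of "(B + Mr * c0) - Mr * s i"] by (simp add: power2_eq_square algebra_simps)
    also have "(s i)\<^sup>2 \<le> 1 + s i powr p" by (rule sq_le_powr[OF s0 p2])
    then have "2 * Mr\<^sup>2 * (s i)\<^sup>2 \<le> 2 * Mr\<^sup>2 * (1 + s i powr p)" by (intro mult_left_mono) auto
    finally show ?thesis by (simp add: K1_def K2_def algebra_simps)
  qed
  show ?case
  proof (rule bigoI[where c="2 * K1 + 3 * K2 * C"])
    show "\<forall>\<^sub>F T in at_top. norm (\<Sum>i\<le>T. (norm (transpose (J (th i \<omega>) (x i \<omega>) (u i \<omega>))))\<^sup>2)
                 \<le> (2 * K1 + 3 * K2 * C) * norm (real T)"
      unfolding eventually_at_top_linorder
    proof (intro exI allI impI)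
      fix T :: nat assume T1: "T \<ge> 1"
      have nn: "0 \<le> (\<Sum>i\<le>T. (norm (transpose (J (th i \<omega>) (x i \<omega>) (u i \<omega>))))\<^sup>2)" by (intro sum_nonneg) auto
      have "(\<Sum>i\<le>T. (norm (transpose (J (th i \<omega>) (x i \<omega>) (u i \<omega>))))\<^sup>2) \<le> (\<Sum>i<Suc T. K1 + K2 * s i powr p)"
        unfolding lessThan_Suc_atMost by (intro sum_mono pt)
      also have "\<dots> = K1 * (real T + 1) + K2 * (\<Sum>i<Suc T. s i powr p)"
        by (simp add: sum.distrib sum_distrib_left distrib_left algebra_simps)
      also have "\<dots> \<le> K1 * (real T + 1) + K2 * (C * (real (Suc T) + 1))"
        using C[of "Suc T"] K0 unfolding s_def by (intro add_mono mult_left_mono) auto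
      also have "\<dots> \<le> (2 * K1 + 3 * K2 * C) * real T"
      proof -
        have "K1 * (real T + 1) \<le> K1 * (2 * real T)" using T1 K0 by (intro mult_left_mono) auto
        moreover have "K2 * (C * (real (Suc T) + 1)) \<le> K2 * (C * (3 * real T))"
          using T1 K0 C0 by (intro mult_left_mono) auto
        ultimately show ?thesis by (simp add: algebra_simps)
      qed
      finally show "norm (\<Sum>i\<le>T. (norm (transpose (J (th i \<omega>) (x i \<omega>) (u i \<omega>))))\<^sup>2)
                 \<le> (2 * K1 + 3 * K2 * C) * norm (real T)" using nn by simp
    qed
  qed
qed

lemma bigo1:
  fixes S :: "nat \<Rightarrow> real"
  assumes "\<forall>T. S T \<le> C * (real T + 1)" "\<And>T. 0 \<le> S T"
  shows "(\<lambda>T. S T / real T) \<in> O(\<lambda>_. 1)"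
proof (rule bigoI[where c="2 * C"])
  show "\<forall>\<^sub>F T in at_top. norm (S T / real T) \<le> 2 * C * norm (1::real)"
    unfolding eventually_at_top_linorder
  proof (intro exI allI impI)
    fix T :: nat assume T1: "T \<ge> 1"
    have C0: "0 \<le> C" using assms(1) assms(2)[of 0] by (metis add.commute add_0 mult.commute mult_1 of_nat_0 order_trans)
    have "S T \<le> C * (real T + 1)" using assms(1) by blast
    also have "\<dots> \<le> C * (2 * real T)" using T1 C0 by (intro mult_left_mono) auto
    finally have "S T / real T \<le> 2 * C" using T1 by (simp add: field_simps)
    then show "norm (S T / real T) \<le> 2 * C * norm (1::real)" using assms(2)[of T] T1 by simp
  qed
qed

theorem mainTheorem5:
  fixes M :: "'w measure" and F :: "nat \<Rightarrow> 'w measure"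
    and h :: "real^'p \<Rightarrow> real^'n \<Rightarrow> real^'m \<Rightarrow> real^'n"
    and J :: "real^'p \<Rightarrow> real^'n \<Rightarrow> real^'m \<Rightarrow> real^'p^'n"
    and ths :: "real^'p"
    and x w :: "nat \<Rightarrow> 'w \<Rightarrow> real^'n"
    and u eps :: "nat \<Rightarrow> 'w \<Rightarrow> real^'m"
    and pol :: "real^'n \<Rightarrow> real^'m"
    and q Lpi epsbar D \<beta> :: real and \<alpha> :: "real \<Rightarrow> real"
    and th :: "nat \<Rightarrow> 'w \<Rightarrow> real^'p" and P :: "nat \<Rightarrow> 'w \<Rightarrow> real^'p^'p"
    and eta :: "nat \<Rightarrow> 'w \<Rightarrow> real"
  assumes prob: "prob_space M"
    \<comment> \<open>nondecreasing sequence of sub-sigma-algebras\<close>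
    and subalg: "\<And>t. subalgebra M (F t)"
    and filt_mono: "\<And>t. sets (F t) \<subseteq> sets (F (Suc t))"
    \<comment> \<open>h differentiable in theta with Jacobian J\<close>
    and jac: "\<And>\<theta> a b. ((\<lambda>s. h s a b) has_derivative (\<lambda>v. J \<theta> a b *v v)) (at \<theta>)"
    \<comment> \<open>system dynamics (y_t = x_t) and inputs\<close>
    and dyn: "\<And>t \<omega>. \<omega> \<in> space M \<Longrightarrow> x (Suc t) \<omega> = h ths (x t \<omega>) (u t \<omega>) + w (Suc t) \<omega>"
    and inp: "\<And>t \<omega>. \<omega> \<in> space M \<Longrightarrow> u t \<omega> = pol (x t \<omega>) + eps t \<omega>"
    and x_meas: "\<And>t. x t \<in> borel_measurable (F t)"
    and u_meas: "\<And>t. u t \<in> borel_measurable (F t)"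
    \<comment> \<open>(A2) martingale difference noise with bounded conditional q-th moments\<close>
    and q_gt: "q > 2"
    and w_meas: "\<And>t. w (Suc t) \<in> borel_measurable (F (Suc t))"
    and w_int: "\<And>t i. integrable M (\<lambda>\<omega>. w (Suc t) \<omega> $ i)"
    and w_mds: "\<And>t i. AE \<omega> in M. real_cond_exp M (F t) (\<lambda>\<omega>. w (Suc t) \<omega> $ i) \<omega> = 0"
    and w_mom: "AE \<omega> in M. (SUP t. nn_cond_exp M (F t)
                  (\<lambda>\<omega>. ennreal (norm (w (Suc t) \<omega>) powr q)) \<omega>) < \<infinity>"
    \<comment> \<open>(A3) Lipschitz policy, bounded exploration, rho-stable closed loop\<close>
    and pol_lip: "\<And>a b. norm (pol a - pol b) \<le> Lpi * norm (a - b)"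
    and eps_bd: "\<And>t \<omega>. \<omega> \<in> space M \<Longrightarrow> norm (eps t \<omega>) \<le> epsbar"
    and stable: "\<exists>\<rho> N. 0 < \<rho> \<and> \<rho> < 1 \<and> is_norm N \<and>
                  (\<forall>t. \<forall>\<omega>\<in>space M. N (h ths (x t \<omega>) (u t \<omega>)) \<le> \<rho> * N (x t \<omega>))"
  shows "(\<forall>\<gamma>. 0 < \<gamma> \<and> \<gamma> < q - 2 \<longrightarrow>
            (AE \<omega> in M. (\<lambda>T. (\<Sum>t<T. norm (x t \<omega>, u t \<omega>) powr (2 + \<gamma>)) / real T)
                          \<in> O(\<lambda>_. 1)))
       \<and> ((\<comment> \<open>(A1)\<close>
            D > 0 \<and> norm ths \<le> D
           \<comment> \<open>(A4)\<close>
           \<and> \<beta> \<ge> 1 \<and> (\<forall>r>0. \<alpha> r > 0)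
           \<and> (\<forall>r>0. \<forall>t. \<forall>\<omega>\<in>space M. \<forall>\<theta>.
                 norm (\<theta> - ths) \<le> r \<and> norm (x t \<omega>) \<le> r \<and> norm (u t \<omega>) \<le> r \<longrightarrow>
                   (\<theta> - ths) \<bullet> loss_grad h J ths \<theta> (x t \<omega>) (u t \<omega>)
                      \<ge> \<alpha> r * (norm (J \<theta> (x t \<omega>) (u t \<omega>) *v (\<theta> - ths)))\<^sup>2
                 \<and> loss h ths \<theta> (x t \<omega>) (u t \<omega>)
                      \<le> \<beta> * ((\<theta> - ths) \<bullet> loss_grad h J ths \<theta> (x t \<omega>) (u t \<omega>)))
           \<and> (\<forall>t. \<forall>\<omega>\<in>space M. continuous_on UNIV (\<lambda>\<theta>. J \<theta> (x t \<omega>) (u t \<omega>)))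
           \<and> (\<forall>r>0. \<exists>Mr>0. \<forall>\<theta> a1 b1 a2 b2. norm (\<theta> - ths) \<le> r \<longrightarrow>
                 norm (J \<theta> a1 b1 - J \<theta> a2 b2) \<le> Mr * norm ((a1, b1) - (a2, b2)))
           \<comment> \<open>Algorithm 1\<close>
           \<and> (\<forall>\<omega>\<in>space M. P 0 \<omega> = mat 1 \<and>
               (\<forall>t. let \<phi> = transpose (J (th t \<omega>) (x t \<omega>) (u t \<omega>));
                       \<alpha>t = \<alpha> (norm (x t \<omega>) + norm (u t \<omega>) + D);
                       \<eta> = eta t \<omega>;
                       \<Gamma> = matrix_inv (mat 1 + \<eta>\<^sup>2 *\<^sub>R (transpose \<phi> ** P t \<omega> ** \<phi>))
                   in \<eta> > 0
                    \<and> P (Suc t) \<omega> = P t \<omega> - \<eta>\<^sup>2 *\<^sub>R (P t \<omega> ** \<phi> ** \<Gamma> ** transpose \<phi> ** P t \<omega>)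
                    \<and> \<eta> = 1 / (1 / \<alpha>t + 2 * \<beta> *
                              onorm (\<lambda>v. (transpose \<phi> ** P (Suc t) \<omega> ** \<phi>) *v v))
                    \<and> is_proj (matrix_inv (P (Suc t) \<omega>)) D
                        (th t \<omega> + \<eta> *\<^sub>R ((P (Suc t) \<omega> ** \<phi>) *v
                                    (x (Suc t) \<omega> - h (th t \<omega>) (x t \<omega>) (u t \<omega>))))
                        (th (Suc t) \<omega>))))
          \<longrightarrow> (AE \<omega> in M. (\<lambda>T. \<Sum>i\<le>T. (norm (transpose (J (th i \<omega>) (x i \<omega>) (u i \<omega>))))\<^sup>2)
                            \<in> O(\<lambda>T. real T)))"

proof -
  have P1: "AE \<omega> in M. \<exists>C. \<forall>T. (\<Sum>t<T. norm (x t \<omega>, u t \<omega>) powr (2 + \<gamma>)) \<le> C * (real T + 1)"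
    if "0 < \<gamma>" "\<gamma> < q - 2" for \<gamma>
    by (rule part1_sum[of M F x h ths u w pol eps q Lpi epsbar \<gamma>, OF prob subalg filt_mono dyn inp q_gt w_meas w_mom pol_lip eps_bd stable that])
  have A: "\<forall>\<gamma>. 0 < \<gamma> \<and> \<gamma> < q - 2 \<longrightarrow>
            (AE \<omega> in M. (\<lambda>T. (\<Sum>t<T. norm (x t \<omega>, u t \<omega>) powr (2 + \<gamma>)) / real T)
                          \<in> O(\<lambda>_. 1))"
  proof (intro allI impI)
    fix \<gamma> :: real assume g: "0 < \<gamma> \<and> \<gamma> < q - 2"
    show "AE \<omega> in M. (\<lambda>T. (\<Sum>t<T. norm (x t \<omega>, u t \<omega>) powr (2 + \<gamma>)) / real T) \<in> O(\<lambda>_. 1)"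
    proof -
      have "AE \<omega> in M. \<exists>C. \<forall>T. (\<Sum>t<T. norm (x t \<omega>, u t \<omega>) powr (2 + \<gamma>)) \<le> C * (real T + 1)"
        using P1[of \<gamma>] g by blast
      then show ?thesis
      proof (rule eventually_mono)
        fix \<omega> assume "\<exists>C. \<forall>T. (\<Sum>t<T. norm (x t \<omega>, u t \<omega>) powr (2 + \<gamma>)) \<le> C * (real T + 1)"
        then obtain C where "\<forall>T. (\<Sum>t<T. norm (x t \<omega>, u t \<omega>) powr (2 + \<gamma>)) \<le> C * (real T + 1)" by blast
        then show "(\<lambda>T. (\<Sum>t<T. norm (x t \<omega>, u t \<omega>) powr (2 + \<gamma>)) / real T) \<in> O(\<lambda>_. 1)"
          by (rule bigo1) (auto intro: sum_nonneg)
      qed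
    qed
  qed
  have q2: "0 < (q - 2) / 2" "(q - 2) / 2 < q - 2" using q_gt by auto
  show ?thesis
    apply (rule conjI[OF A])
    apply (intro impI, elim conjE)
    subgoal premises H
    proof -
      have projD: "\<forall>\<omega>\<in>space M. \<forall>t. norm (th (Suc t) \<omega>) \<le> D"
        using H(8) by (auto simp: Let_def is_proj_def)
      show ?thesis
        by (rule part2[OF P1[OF q2] _ H(2) H(6) H(7) projD]) (use q_gt in simp)
    qed
    done
qed

end
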